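(* Let $d\ge1$, $G\le S_d$, $n\ge 0$. Then $\mathscr{P}^G_n$ is spanned by the tensors $\delta_Q$, where $Q$ ranges over set partitions of $\{1,\dots,n\}$, together with the tensors $T_P(S)$, where $P$ ranges over set partitions of the disjoint union $\{a_1,\dots,a_d\}\sqcup\{b_1,\dots,b_n\}$. Here $\delta_Q=\sum_{\vec j} e_{\vec j}$, summed over $\vec j\in[d]^n$ with $j_s=j_t$ whenever $s,t$ lie in a common block of $Q$, and $T_P(S)=\sum_{\vec j\in[d]^n}\Big(\sum_{\vec k\in[d]^d} S_{\vec k}\,\chi_P(\vec k,\vec j)\Big)e_{\vec j}$, where $\chi_P(\vec k,\vec j)=1$ if the labelling $a_s\mapsto k_s$, $b_t\mapsto j_t$ is constant on each block of $P$, and $\chi_P(\vec k,\vec j)=0$ otherwise. (For $n=0$, $\mathscr{P}^G_0=\mathbb{C}$ and $\delta_\emptyset=1$.)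
   Context: $V=\mathbb{C}^d$ with basis $e_1,\dots,e_d$; $\mathscr{P}_0=\mathbb{C}$, $\mathscr{P}_n=V^{\otimes n}$, $e_{\vec j}=e_{j_1}\otimes\cdots\otimes e_{j_n}$. A subgroup $G\le S_d$ acts by $g\cdot e_i=e_{g(i)}$, diagonally on tensor powers; $\mathscr{P}^G_n$ is the subspace of $G$-fixed vectors in $\mathscr{P}_n$. The molecule is $S=\sum_{g\in G}e_{g(1)}\otimes\cdots\otimes e_{g(d)}=\sum_{\vec k\in[d]^d}S_{\vec k}e_{\vec k}$. *)

theory Defs
  imports Complex_Main "HOL-Library.Disjoint_Sets" "HOL-Library.FuncSet"
    "HOL-Combinatorics.Permutations" "HOL-Library.Function_Algebras"
begin

(* Indices are 0-based: the basis of V = C^d is e_0,...,e_{d-1}.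
  A tensor in P_n = V^{\<otimes>n} is represented by its coefficient function
  on multi-indices j in {..<n} \<rightarrow>\<^sub>E {..<d}, extended by 0 elsewhere. *)

type_synonym tensor = "(nat \<Rightarrow> nat) \<Rightarrow> complex"

definition idx :: "nat \<Rightarrow> nat \<Rightarrow> (nat \<Rightarrow> nat) set" where
  "idx d n = {..<n} \<rightarrow>\<^sub>E {..<d}"

definition is_tensor :: "nat \<Rightarrow> nat \<Rightarrow> tensor \<Rightarrow> bool" where
  "is_tensor d n T \<longleftrightarrow> (\<forall>j. j \<notin> idx d n \<longrightarrow> T j = 0)"

(* G is a subgroup of S_d (permutations of {..<d}); finite, so closure
  under composition and containing id suffices. *)
definition subgroup_Sd :: "nat \<Rightarrow> (nat \<Rightarrow> nat) set \<Rightarrow> bool" where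
  "subgroup_Sd d G \<longleftrightarrow> G \<subseteq> {g. g permutes {..<d}} \<and> id \<in> G
     \<and> (\<forall>g\<in>G. \<forall>h\<in>G. g \<circ> h \<in> G)"

(* Diagonal action: g . e_j = e_{g o j}; T is fixed iff its coefficients
  are constant along orbits. *)
definition invariant_tensors :: "nat \<Rightarrow> (nat \<Rightarrow> nat) set \<Rightarrow> nat \<Rightarrow> tensor set" where
  "invariant_tensors d G n = {T. is_tensor d n T \<and>
     (\<forall>g\<in>G. \<forall>j\<in>idx d n. T (restrict (g \<circ> j) {..<n}) = T j)}"

definition tspan :: "tensor set \<Rightarrow> tensor set" where
  "tspan A = module.span (\<lambda>(c::complex) (T::tensor). (\<lambda>j. c * T j)) A"

definition delta :: "nat \<Rightarrow> nat \<Rightarrow> nat set set \<Rightarrow> tensor" where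
  "delta d n Q = (\<lambda>j. if j \<in> idx d n \<and> (\<forall>B\<in>Q. \<forall>s\<in>B. \<forall>t\<in>B. j s = j t) then 1 else 0)"

(* Coefficients of the molecule S = sum_{g in G} e_{g(0)} ... e_{g(d-1)}. *)
definition molecule :: "nat \<Rightarrow> (nat \<Rightarrow> nat) set \<Rightarrow> (nat \<Rightarrow> nat) \<Rightarrow> complex" where
  "molecule d G k = (\<Sum>g\<in>G. if k = restrict g {..<d} then 1 else 0)"

(* Disjoint union {a_0..a_{d-1}} \<sqcup> {b_0..b_{n-1}} as Inl/Inr. *)
definition ab_set :: "nat \<Rightarrow> nat \<Rightarrow> (nat + nat) set" where
  "ab_set d n = Inl ` {..<d} \<union> Inr ` {..<n}"

definition chi :: "(nat + nat) set set \<Rightarrow> (nat \<Rightarrow> nat) \<Rightarrow> (nat \<Rightarrow> nat) \<Rightarrow> complex" where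
  "chi P k j = (if \<forall>B\<in>P. \<forall>x\<in>B. \<forall>y\<in>B. case_sum k j x = case_sum k j y then 1 else 0)"

definition T_P :: "nat \<Rightarrow> nat \<Rightarrow> (nat + nat) set set \<Rightarrow> ((nat \<Rightarrow> nat) \<Rightarrow> complex) \<Rightarrow> tensor" where
  "T_P d n P S = (\<lambda>j. if j \<in> idx d n then (\<Sum>k\<in>idx d d. S k * chi P k j) else 0)"

end

theory Submission
  imports Defs
begin

lemma module_tensor: "module (\<lambda>(c::complex) (T::tensor). (\<lambda>j. c * T j))"
  by unfold_locales (auto simp: fun_eq_iff algebra_simps)

lemma sum_fun_apply: "finite A \<Longrightarrow> (sum f A) x = (\<Sum>a\<in>A. f a x)"
  by (induction A rule: finite_induct) auto

lemma subspace_inv: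
  "module.subspace (\<lambda>(c::complex) (T::tensor). (\<lambda>j. c * T j)) (invariant_tensors d G n)"
  unfolding module.subspace_def[OF module_tensor] invariant_tensors_def is_tensor_def
  by auto

lemma perm_facts:
  assumes "g permutes {..<d}"
  shows "inj g" "\<And>x. x < d \<Longrightarrow> g x < d"
  using assms permutes_inj permutes_in_image[OF assms, of x for x] by auto

lemma restrict_idx:
  assumes "g permutes {..<d}" "j \<in> idx d n"
  shows "restrict (g \<circ> j) {..<n} \<in> idx d n"
  using assms permutes_in_image[OF assms(1)] unfolding idx_def by (auto simp: PiE_def Pi_def)

lemma bij_idx:
  assumes "g permutes {..<d}"
  shows "bij_betw (\<lambda>j. restrict (g \<circ> j) {..<n}) (idx d n) (idx d n)"
proof (rule bij_betw_byWitness[where f'="\<lambda>j. restrict (inv g \<circ> j) {..<n}"])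
  have ig: "inv g permutes {..<d}" using assms permutes_inv by blast
  show "\<forall>a\<in>idx d n. restrict (inv g \<circ> restrict (g \<circ> a) {..<n}) {..<n} = a"
    using assms permutes_inverses(2)[OF assms] unfolding idx_def
    by (auto simp: fun_eq_iff PiE_def extensional_def)
  show "\<forall>a'\<in>idx d n. restrict (g \<circ> restrict (inv g \<circ> a') {..<n}) {..<n} = a'"
    using assms permutes_inverses(1)[OF assms] unfolding idx_def
    by (auto simp: fun_eq_iff PiE_def extensional_def)
  show "(\<lambda>j. restrict (g \<circ> j) {..<n}) ` idx d n \<subseteq> idx d n"
    using restrict_idx[OF assms] by auto
  show "(\<lambda>j. restrict (inv g \<circ> j) {..<n}) ` idx d n \<subseteq> idx d n"
    using restrict_idx[OF ig] by auto
qed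

lemma G_facts:
  assumes "subgroup_Sd d G"
  shows "finite G" "\<And>g. g \<in> G \<Longrightarrow> g permutes {..<d}" "id \<in> G"
    "\<And>g h. g \<in> G \<Longrightarrow> h \<in> G \<Longrightarrow> g \<circ> h \<in> G"
proof -
  show "finite G" using assms unfolding subgroup_Sd_def
    using finite_permutations[of "{..<d}"] finite_subset by blast
qed (use assms in \<open>auto simp: subgroup_Sd_def\<close>)

lemma bij_G:
  assumes "subgroup_Sd d G" "g \<in> G"
  shows "bij_betw (\<lambda>h. g \<circ> h) G G"
proof -
  have ig: "inj g" using perm_facts(1) G_facts(2)[OF assms] .
  have inj: "inj_on (\<lambda>h. g \<circ> h) G"
  proof (rule inj_onI)
    fix h1 h2 assume "g \<circ> h1 = g \<circ> h2"
    then have "\<And>x. g (h1 x) = g (h2 x)" by (metis comp_apply)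
    then show "h1 = h2" using ig by (simp add: fun_eq_iff injD)
  qed
  have sub: "(\<lambda>h. g \<circ> h) ` G \<subseteq> G" using G_facts(4)[OF assms(1) assms(2)] by auto
  show ?thesis using endo_inj_surj[OF G_facts(1)[OF assms(1)] sub inj] inj
    by (simp add: bij_betw_def)
qed

lemma molecule_inv:
  assumes "subgroup_Sd d G" "g \<in> G" "k \<in> idx d d"
  shows "molecule d G (restrict (g \<circ> k) {..<d}) = molecule d G k"
proof -
  have ig: "inj g" using perm_facts(1) G_facts(2)[OF assms(1,2)] .
  have "molecule d G (restrict (g \<circ> k) {..<d})
      = (\<Sum>h\<in>G. if restrict (g \<circ> k) {..<d} = restrict (g \<circ> h) {..<d} then 1 else 0)"
    unfolding molecule_def by (rule sym[OF sum.reindex_bij_betw[OF bij_G[OF assms(1,2)],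
      of "\<lambda>h. if restrict (g \<circ> k) {..<d} = restrict h {..<d} then 1 else 0"]])
  also have "\<dots> = (\<Sum>h\<in>G. if k = restrict h {..<d} then 1 else 0)"
  proof (rule sum.cong[OF refl])
    fix h assume "h \<in> G"
    have "(restrict (g \<circ> k) {..<d} = restrict (g \<circ> h) {..<d}) = (k = restrict h {..<d})"
      using assms(3) ig unfolding idx_def
      by (auto simp: fun_eq_iff PiE_def extensional_def inj_eq)
    then show "(if restrict (g \<circ> k) {..<d} = restrict (g \<circ> h) {..<d} then 1 else 0) =
          (if k = restrict h {..<d} then 1 else (0::complex))" by simp
  qed
  finally show ?thesis unfolding molecule_def .
qed

lemma delta_inv:
  assumes "subgroup_Sd d G" "partition_on {..<n} Q"
  shows "delta d n Q \<in> invariant_tensors d G n"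
  unfolding invariant_tensors_def is_tensor_def
proof (intro CollectI conjI allI impI ballI)
  fix j assume "j \<notin> idx d n" then show "delta d n Q j = 0" by (simp add: delta_def)
next
  fix g j assume g: "g \<in> G" and j: "j \<in> idx d n"
  have gp: "g permutes {..<d}" using G_facts(2)[OF assms(1) g] .
  have ig: "inj g" using perm_facts(1)[OF gp] .
  have sub: "\<And>B s. B \<in> Q \<Longrightarrow> s \<in> B \<Longrightarrow> s < n"
    using assms(2) unfolding partition_on_def by auto
  have key: "\<And>B s t. B \<in> Q \<Longrightarrow> s \<in> B \<Longrightarrow> t \<in> B \<Longrightarrow>
     (restrict (g \<circ> j) {..<n} s = restrict (g \<circ> j) {..<n} t) = (j s = j t)"
    using sub by (simp add: inj_eq[OF ig])
  have "(\<forall>B\<in>Q. \<forall>s\<in>B. \<forall>t\<in>B. restrict (g \<circ> j) {..<n} s = restrict (g \<circ> j) {..<n} t)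
     = (\<forall>B\<in>Q. \<forall>s\<in>B. \<forall>t\<in>B. j s = j t)"
    using key by blast
  then show "delta d n Q (restrict (g \<circ> j) {..<n}) = delta d n Q j"
    unfolding delta_def using restrict_idx[OF gp j] j by simp
qed

lemma chi_inv:
  assumes "inj g" "partition_on (ab_set d n) P"
  shows "chi P (restrict (g \<circ> k) {..<d}) (restrict (g \<circ> j) {..<n}) = chi P k j"
proof -
  have sub: "\<And>B x. B \<in> P \<Longrightarrow> x \<in> B \<Longrightarrow> x \<in> ab_set d n"
    using assms(2) unfolding partition_on_def by auto
  have eq: "\<And>x. x \<in> ab_set d n \<Longrightarrow> case_sum (restrict (g \<circ> k) {..<d}) (restrict (g \<circ> j) {..<n}) x
      = g (case_sum k j x)"
    by (auto simp: ab_set_def)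
  have "(\<forall>B\<in>P. \<forall>x\<in>B. \<forall>y\<in>B. case_sum (restrict (g \<circ> k) {..<d}) (restrict (g \<circ> j) {..<n}) x
      = case_sum (restrict (g \<circ> k) {..<d}) (restrict (g \<circ> j) {..<n}) y)
     = (\<forall>B\<in>P. \<forall>x\<in>B. \<forall>y\<in>B. case_sum k j x = case_sum k j y)"
    using sub eq inj_eq[OF assms(1)] by (smt (verit))
  then show ?thesis unfolding chi_def by simp
qed

lemma TP_inv:
  assumes "subgroup_Sd d G" "partition_on (ab_set d n) P"
  shows "T_P d n P (molecule d G) \<in> invariant_tensors d G n"
  unfolding invariant_tensors_def is_tensor_def
proof (intro CollectI conjI allI impI ballI)
  fix j assume "j \<notin> idx d n" then show "T_P d n P (molecule d G) j = 0" by (simp add: T_P_def)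
next
  fix g j assume g: "g \<in> G" and j: "j \<in> idx d n"
  have gp: "g permutes {..<d}" using G_facts(2)[OF assms(1) g] .
  have ig: "inj g" using perm_facts(1)[OF gp] .
  have "(\<Sum>k\<in>idx d d. molecule d G k * chi P k (restrict (g \<circ> j) {..<n}))
      = (\<Sum>k\<in>idx d d. molecule d G (restrict (g \<circ> k) {..<d}) *
           chi P (restrict (g \<circ> k) {..<d}) (restrict (g \<circ> j) {..<n}))"
    using sum.reindex_bij_betw[OF bij_idx[OF gp, of d],
      of "\<lambda>k. molecule d G k * chi P k (restrict (g \<circ> j) {..<n})"] by simp
  also have "\<dots> = (\<Sum>k\<in>idx d d. molecule d G k * chi P k j)"
    using molecule_inv[OF assms(1) g] chi_inv[OF ig assms(2)] by simp
  finally show "T_P d n P (molecule d G) (restrict (g \<circ> j) {..<n}) = T_P d n P (molecule d G) j"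
    unfolding T_P_def using restrict_idx[OF gp j] j by simp
qed

lemma ifm1: "(if P then 1 else 0) * (x::complex) = (if P then x else 0)" by simp
lemma ifm2: "x * (if P then 1 else 0) = (if P then x else (0::complex))" by simp

definition Pj :: "nat \<Rightarrow> nat \<Rightarrow> (nat \<Rightarrow> nat) \<Rightarrow> (nat + nat) set set" where
  "Pj d n j = (\<lambda>s. insert (Inl s) (Inr ` {t. t < n \<and> j t = s})) ` {..<d}"

lemma Pj_partition:
  assumes "j \<in> idx d n"
  shows "partition_on (ab_set d n) (Pj d n j)"
proof (rule partition_onI)
  show "\<Union> (Pj d n j) = ab_set d n"
    using assms unfolding Pj_def ab_set_def idx_def by (auto simp: PiE_def Pi_def)
  show "{} \<notin> Pj d n j" unfolding Pj_def by auto
  fix p q assume "p \<in> Pj d n j" "q \<in> Pj d n j" "p \<noteq> q"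
  then show "disjnt p q" unfolding Pj_def disjnt_def by auto
qed

lemma chi_Pj:
  assumes "j \<in> idx d n"
  shows "chi (Pj d n j) k j' = (if \<forall>t<n. j' t = k (j t) then 1 else 0)"
proof -
  have jd: "\<And>t. t < n \<Longrightarrow> j t < d" using assms unfolding idx_def by auto
  have "(\<forall>B\<in>Pj d n j. \<forall>x\<in>B. \<forall>y\<in>B. case_sum k j' x = case_sum k j' y) = (\<forall>t<n. j' t = k (j t))"
  proof
    assume H: "\<forall>B\<in>Pj d n j. \<forall>x\<in>B. \<forall>y\<in>B. case_sum k j' x = case_sum k j' y"
    show "\<forall>t<n. j' t = k (j t)"
    proof (intro allI impI)
      fix t assume t: "t < n"
      let ?B = "insert (Inl (j t)) (Inr ` {u. u < n \<and> j u = j t})"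
      have "?B \<in> Pj d n j" unfolding Pj_def
        by (rule imageI) (simp add: jd[OF t])
      then have H2: "\<forall>x\<in>?B. \<forall>y\<in>?B. case_sum k j' x = case_sum k j' y" using H by (rule bspec[rotated])
      have "Inr t \<in> ?B" using t by simp
      moreover have "Inl (j t) \<in> ?B" by simp
      ultimately have "case_sum k j' (Inr t) = case_sum k j' (Inl (j t))"
        using H2 by (elim bspec[elim_format]; assumption?)
      then show "j' t = k (j t)" by simp
    qed
  next
    assume H: "\<forall>t<n. j' t = k (j t)"
    show "\<forall>B\<in>Pj d n j. \<forall>x\<in>B. \<forall>y\<in>B. case_sum k j' x = case_sum k j' y"
    proof (intro ballI)
      fix B x y assume B: "B \<in> Pj d n j" and x: "x \<in> B" and y: "y \<in> B"
      from B obtain s where B': "B = insert (Inl s) (Inr ` {t. t < n \<and> j t = s})"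
        unfolding Pj_def by blast
      have c: "\<And>z. z \<in> B \<Longrightarrow> case_sum k j' z = k s"
      proof -
        fix z assume "z \<in> B"
        then consider "z = Inl s" | t where "z = Inr t" "t < n" "j t = s" using B' by blast
        then show "case_sum k j' z = k s"
        proof cases
          case 1 then show ?thesis by simp
        next
          case (2 t) then show ?thesis using H by simp
        qed
      qed
      show "case_sum k j' x = case_sum k j' y" using c[OF x] c[OF y] by simp
    qed
  qed
  then show ?thesis unfolding chi_def by simp
qed

lemma TP_Pj:
  assumes "subgroup_Sd d G" "j \<in> idx d n" "j' \<in> idx d n"
  shows "T_P d n (Pj d n j) (molecule d G) j' = (\<Sum>g\<in>G. if j' = restrict (g \<circ> j) {..<n} then 1 else 0)"
proof -
  have fin: "finite (idx d d)" unfolding idx_def by (simp add: finite_PiE)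
  have gi: "\<And>g. g \<in> G \<Longrightarrow> restrict g {..<d} \<in> idx d d"
    using G_facts(2)[OF assms(1)] permutes_in_image unfolding idx_def by fastforce
  have jd: "\<And>t. t < n \<Longrightarrow> j t < d" using assms(2) unfolding idx_def by auto
  have "T_P d n (Pj d n j) (molecule d G) j'
     = (\<Sum>k\<in>idx d d. \<Sum>g\<in>G. (if k = restrict g {..<d} then 1 else 0) * chi (Pj d n j) k j')"
    unfolding T_P_def molecule_def using assms(3) by (simp add: sum_distrib_right)
  also have "\<dots> = (\<Sum>g\<in>G. \<Sum>k\<in>idx d d. (if k = restrict g {..<d} then 1 else 0) * chi (Pj d n j) k j')"
    by (rule sum.swap)
  also have "\<dots> = (\<Sum>g\<in>G. chi (Pj d n j) (restrict g {..<d}) j')"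
    using gi fin by (simp add: ifm1 sum.delta)
  also have "\<dots> = (\<Sum>g\<in>G. if j' = restrict (g \<circ> j) {..<n} then 1 else 0)"
  proof (rule sum.cong[OF refl])
    fix g assume "g \<in> G"
    have "(\<forall>t<n. j' t = restrict g {..<d} (j t)) = (j' = restrict (g \<circ> j) {..<n})"
      using assms(3) jd unfolding idx_def by (auto simp: fun_eq_iff PiE_def extensional_def)
    then show "chi (Pj d n j) (restrict g {..<d}) j' = (if j' = restrict (g \<circ> j) {..<n} then 1 else 0)"
      using chi_Pj[OF assms(2)] by simp
  qed
  finally show ?thesis .
qed

lemma per_g:
  assumes "subgroup_Sd d G" "g \<in> G" "T \<in> invariant_tensors d G n" "j' \<in> idx d n"
  shows "(\<Sum>j\<in>idx d n. T j * (if j' = restrict (g \<circ> j) {..<n} then 1 else 0)) = T j'"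
proof -
  have gp: "g permutes {..<d}" using G_facts(2)[OF assms(1,2)] .
  have fin: "finite (idx d n)" unfolding idx_def by (simp add: finite_PiE)
  have inv: "\<And>j. j \<in> idx d n \<Longrightarrow> T (restrict (g \<circ> j) {..<n}) = T j"
    using assms(2,3) unfolding invariant_tensors_def by auto
  have "(\<Sum>j\<in>idx d n. T j * (if j' = restrict (g \<circ> j) {..<n} then 1 else 0))
     = (\<Sum>j\<in>idx d n. T (restrict (g \<circ> j) {..<n}) * (if j' = restrict (g \<circ> j) {..<n} then 1 else 0))"
    using inv by simp
  also have "\<dots> = (\<Sum>j\<in>idx d n. T j * (if j' = j then 1 else 0))"
    by (rule sum.reindex_bij_betw[OF bij_idx[OF gp], of "\<lambda>j. T j * (if j' = j then 1 else 0)"])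
  also have "\<dots> = T j'" using assms(4) fin by (simp add: ifm2 sum.delta')
  finally show ?thesis .
qed

theorem theorem4p3:
  fixes d n :: nat and G :: "(nat \<Rightarrow> nat) set"
  assumes "d \<ge> 1" and "subgroup_Sd d G"
  shows "invariant_tensors d G n =
    tspan ({delta d n Q | Q. partition_on {..<n} Q}
           \<union> {T_P d n P (molecule d G) | P. partition_on (ab_set d n) P})"
proof
  let ?A = "{delta d n Q | Q. partition_on {..<n} Q}
           \<union> {T_P d n P (molecule d G) | P. partition_on (ab_set d n) P}"
  show "tspan ?A \<subseteq> invariant_tensors d G n"
    unfolding tspan_def
    by (rule module.span_minimal[OF module_tensor _ subspace_inv])
       (use delta_inv[OF assms(2)] TP_inv[OF assms(2)] in blast)
  show "invariant_tensors d G n \<subseteq> tspan ?A"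
  proof
    fix T assume T: "T \<in> invariant_tensors d G n"
    let ?F = "\<lambda>j. T_P d n (Pj d n j) (molecule d G)"
    let ?c = "\<lambda>j. T j / of_nat (card G)"
    have fin: "finite (idx d n)" unfolding idx_def by (simp add: finite_PiE)
    have finG: "finite G" using G_facts(1)[OF assms(2)] .
    have cG: "card G > 0" using finG G_facts(3)[OF assms(2)] card_gt_0_iff by blast
    have eq: "T = (\<Sum>j\<in>idx d n. (\<lambda>x. ?c j * ?F j x))"
    proof
      fix j'
      have "(\<Sum>j\<in>idx d n. (\<lambda>x. ?c j * ?F j x)) j' = (\<Sum>j\<in>idx d n. ?c j * ?F j j')"
        using fin by (rule sum_fun_apply)
      also have "\<dots> = T j'"
      proof (cases "j' \<in> idx d n")
        case False
        then have "T j' = 0" using T unfolding invariant_tensors_def is_tensor_def by auto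
        then show ?thesis using False by (simp add: T_P_def)
      next
        case True
        have "(\<Sum>j\<in>idx d n. ?c j * ?F j j')
          = (\<Sum>j\<in>idx d n. ?c j * (\<Sum>g\<in>G. if j' = restrict (g \<circ> j) {..<n} then 1 else 0))"
          using TP_Pj[OF assms(2) _ True] by simp
        also have "\<dots> = (\<Sum>g\<in>G. \<Sum>j\<in>idx d n. T j * (if j' = restrict (g \<circ> j) {..<n} then 1 else 0))
             / of_nat (card G)"
          by (simp add: sum_distrib_left sum_divide_distrib sum.swap[of _ G])
        also have "\<dots> = (\<Sum>g\<in>G. T j') / of_nat (card G)"
          using per_g[OF assms(2) _ T True] by simp
        also have "\<dots> = T j'" using cG by simp
        finally show ?thesis .
      qed
      finally show "T j' = (\<Sum>j\<in>idx d n. (\<lambda>x. ?c j * ?F j x)) j'" by simp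
    qed
    have "(\<Sum>j\<in>idx d n. (\<lambda>x. ?c j * ?F j x)) \<in> tspan ?A"
      unfolding tspan_def
    proof (rule module.span_sum[OF module_tensor])
      fix j assume j: "j \<in> idx d n"
      have "?F j \<in> ?A" using Pj_partition[OF j] by blast
      then have "?F j \<in> module.span (\<lambda>(c::complex) (T::tensor). (\<lambda>j. c * T j)) ?A"
        by (rule module.span_base[OF module_tensor])
      from module.span_scale[OF module_tensor this, of "?c j"]
      show "(\<lambda>x. ?c j * ?F j x) \<in> module.span (\<lambda>(c::complex) (T::tensor). (\<lambda>j. c * T j)) ?A"
        by simp
    qed
    then show "T \<in> tspan ?A" using eq by simp
  qed
qed

end
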